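(* Let $p\ge1$, $m\in\mathbb{N}$, $a,b>0$, $\beta\in\mathbb{R}^p$, let $f=(1,f_1,\ldots,f_{p-1})^T$ be arbitrary regression functions on a design region $\mathcal{X}$, let $A$ be a real $p\times s$ matrix of rank $s$ and $B=AA^T$. Then a design $\xi^*$ is $L$-optimal (with respect to $B$) in the Poisson–Gamma model if and only if $\xi^*$ is $L$-optimal (with respect to $B$) in the Poisson model. In particular, for any $c\in\mathbb{R}^p\setminus\{0\}$, $\xi^*$ is $c$-optimal in the Poisson–Gamma model if and only if it is $c$-optimal in the Poisson model.
   Context: A design $\xi$ is a probability measure on $\mathcal{X}$ with finite support $x_1,\ldots,x_l$ and weights $w_1,\ldots,w_l\ge0$, $\sum_j w_j=1$. The Poisson information matrix is $M_{Po}(\xi;\beta)=\sum_{j=1}^l w_j\exp(f(x_j)^T\beta)f(x_j)f(x_j)^T$, and the Poisson–Gamma information matrix is $M(\xi;\beta)=\frac{a}{b}\Bigl(M_{Po}(\xi;\beta)-\frac{M_{Po}(\xi;\beta)e_1e_1^TM_{Po}(\xi;\beta)}{e_1^TM_{Po}(\xi;\beta)e_1+b/m}\Bigr)$, $e_1$ the first standard unit vector of $\mathbb{R}^p$. For a model with information matrix $N(\xi)$ (either $M$ or $M_{Po}$), $A^T\beta$ is identifiable for $\xi$ if $A=N(\xi)H$ for some $H\in\mathbb{R}^{p\times s}$. A design $\xi^*$ is $L$-optimal with respect to $B=AA^T$ if $A^T\beta$ is identifiable for $\xi^*$ and $\operatorname{tr}(N(\xi^* )^-B)\le\operatorname{tr}(N(\xi)^-B)$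 for all designs $\xi$ for which $A^T\beta$ is identifiable ($^-$ a generalized inverse). $c$-optimality is the special case $A=c$, $B=cc^T$, with criterion $c^TN(\xi)^-c$. *)

theory Defs
  imports "Jordan_Normal_Form.DL_Rank"
begin

definition supp_design :: "('x \<Rightarrow> real) \<Rightarrow> 'x set" where
  "supp_design w = {x. w x \<noteq> 0}"

definition is_design :: "'x set \<Rightarrow> ('x \<Rightarrow> real) \<Rightarrow> bool" where
  "is_design X w \<longleftrightarrow> finite (supp_design w) \<and> supp_design w \<subseteq> X
     \<and> (\<forall>x. 0 \<le> w x) \<and> (\<Sum>x\<in>supp_design w. w x) = 1"

definition M_Po :: "nat \<Rightarrow> ('x \<Rightarrow> real vec) \<Rightarrow> real vec \<Rightarrow> ('x \<Rightarrow> real) \<Rightarrow> real mat" where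
  "M_Po p f \<beta> w = mat p p (\<lambda>(i,j). \<Sum>x\<in>supp_design w. w x * exp (f x \<bullet> \<beta>) * (f x $ i) * (f x $ j))"

text \<open>Poisson-Gamma information matrix
  (a/b) (M_Po - M_Po e1 e1^T M_Po / (e1^T M_Po e1 + b/m)); index 0 is the first coordinate.\<close>
definition M_PG :: "nat \<Rightarrow> nat \<Rightarrow> real \<Rightarrow> real \<Rightarrow> ('x \<Rightarrow> real vec) \<Rightarrow> real vec \<Rightarrow> ('x \<Rightarrow> real) \<Rightarrow> real mat" where
  "M_PG p m a b f \<beta> w =
     (let M = M_Po p f \<beta> w; e1 = unit_vec p 0 in
      (a / b) \<cdot>\<^sub>m (M - (1 / (e1 \<bullet> (M *\<^sub>v e1) + b / real m)) \<cdot>\<^sub>m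
          ((M * mat_of_cols p [e1]) * (mat_of_rows p [e1] * M))))"

definition mat_trace :: "real mat \<Rightarrow> real" where
  "mat_trace C = (\<Sum>i<dim_row C. C $$ (i,i))"

definition g_inverse :: "nat \<Rightarrow> real mat \<Rightarrow> real mat \<Rightarrow> bool" where
  "g_inverse p N G \<longleftrightarrow> G \<in> carrier_mat p p \<and> N * G * N = N"

text \<open>A^T beta identifiable for N: A = N H for some p x s matrix H.\<close>
definition identifiable :: "nat \<Rightarrow> real mat \<Rightarrow> real mat \<Rightarrow> bool" where
  "identifiable p N A \<longleftrightarrow> (\<exists>H \<in> carrier_mat p (dim_col A). A = N * H)"

definition L_optimal :: "nat \<Rightarrow> 'x set \<Rightarrow> (('x \<Rightarrow> real) \<Rightarrow> real mat) \<Rightarrow> real mat \<Rightarrow> ('x \<Rightarrow> real) \<Rightarrow> bool" where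
  "L_optimal p X N A \<xi>s \<longleftrightarrow> is_design X \<xi>s \<and> identifiable p (N \<xi>s) A \<and>
     (\<forall>\<xi>. is_design X \<xi> \<and> identifiable p (N \<xi>) A \<longrightarrow>
        (\<forall>Gs G. g_inverse p (N \<xi>s) Gs \<longrightarrow> g_inverse p (N \<xi>) G \<longrightarrow>
           mat_trace (Gs * (A * A\<^sup>T)) \<le> mat_trace (G * (A * A\<^sup>T))))"

definition c_optimal :: "nat \<Rightarrow> 'x set \<Rightarrow> (('x \<Rightarrow> real) \<Rightarrow> real mat) \<Rightarrow> real vec \<Rightarrow> ('x \<Rightarrow> real) \<Rightarrow> bool" where
  "c_optimal p X N c \<xi>s \<longleftrightarrow> is_design X \<xi>s \<and> (\<exists>h \<in> carrier_vec p. c = N \<xi>s *\<^sub>v h) \<and>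
     (\<forall>\<xi>. is_design X \<xi> \<and> (\<exists>h \<in> carrier_vec p. c = N \<xi> *\<^sub>v h) \<longrightarrow>
        (\<forall>Gs G. g_inverse p (N \<xi>s) Gs \<longrightarrow> g_inverse p (N \<xi>) G \<longrightarrow>
           c \<bullet> (Gs *\<^sub>v c) \<le> c \<bullet> (G *\<^sub>v c)))"

end

theory Submission
  imports Defs
begin

context
  fixes p :: nat
begin

lemma cp_mult: "A \<in> carrier_mat p p \<Longrightarrow> B \<in> carrier_mat p p \<Longrightarrow> A * B \<in> carrier_mat p p" by auto
lemma cp_add: "A \<in> carrier_mat p p \<Longrightarrow> B \<in> carrier_mat p p \<Longrightarrow> A + B \<in> carrier_mat p p" by auto
lemma cp_minus: "A \<in> carrier_mat p p \<Longrightarrow> B \<in> carrier_mat p p \<Longrightarrow> (A::real mat) - B \<in> carrier_mat p p" by auto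
lemma cp_smult: "A \<in> carrier_mat p p \<Longrightarrow> r \<cdot>\<^sub>m A \<in> carrier_mat p p" by auto
lemma cp_assoc: "A \<in> carrier_mat p p \<Longrightarrow> B \<in> carrier_mat p p \<Longrightarrow> C \<in> carrier_mat p p \<Longrightarrow> A * B * C = A * (B * C)"
  by (rule assoc_mult_mat) auto
lemma cp_d1: "A \<in> carrier_mat p p \<Longrightarrow> B \<in> carrier_mat p p \<Longrightarrow> C \<in> carrier_mat p p \<Longrightarrow> A * (B + C) = A * B + A * C"
  by (rule mult_add_distrib_mat) auto
lemma cp_d2: "A \<in> carrier_mat p p \<Longrightarrow> B \<in> carrier_mat p p \<Longrightarrow> C \<in> carrier_mat p p \<Longrightarrow> (B + C) * A = B * A + C * A"
  by (rule add_mult_distrib_mat) auto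
lemma cp_d3: "A \<in> carrier_mat p p \<Longrightarrow> B \<in> carrier_mat p p \<Longrightarrow> C \<in> carrier_mat p p \<Longrightarrow> A * (B - C) = A * B - A * (C::real mat)"
  by (rule mult_minus_distrib_mat) auto
lemma cp_d4: "A \<in> carrier_mat p p \<Longrightarrow> B \<in> carrier_mat p p \<Longrightarrow> C \<in> carrier_mat p p \<Longrightarrow> (B - C) * A = B * A - C * (A::real mat)"
  by (rule minus_mult_distrib_mat) auto
lemma cp_s1: "A \<in> carrier_mat p p \<Longrightarrow> B \<in> carrier_mat p p \<Longrightarrow> (r \<cdot>\<^sub>m A) * B = r \<cdot>\<^sub>m (A * (B::real mat))"
  by (rule mult_smult_assoc_mat) auto
lemma cp_s2: "A \<in> carrier_mat p p \<Longrightarrow> B \<in> carrier_mat p p \<Longrightarrow> A * (r \<cdot>\<^sub>m B) = r \<cdot>\<^sub>m (A * (B::real mat))"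
  by (rule mult_smult_distrib) auto
lemma cp_s3: "r \<cdot>\<^sub>m (s \<cdot>\<^sub>m A) = (r * s) \<cdot>\<^sub>m (A :: real mat)"
  by (rule eq_matI) auto
lemma cp_s4: "A \<in> carrier_mat p p \<Longrightarrow> B \<in> carrier_mat p p \<Longrightarrow> r \<cdot>\<^sub>m (A + B) = r \<cdot>\<^sub>m A + r \<cdot>\<^sub>m (B :: real mat)"
  by (rule eq_matI) (auto simp: algebra_simps)
lemma cp_s5: "A \<in> carrier_mat p p \<Longrightarrow> B \<in> carrier_mat p p \<Longrightarrow> r \<cdot>\<^sub>m (A - B) = r \<cdot>\<^sub>m A - r \<cdot>\<^sub>m (B :: real mat)"
  by (rule eq_matI) (auto simp: algebra_simps)

lemma cp_1l: "A \<in> carrier_mat p p \<Longrightarrow> 1\<^sub>m p * A = (A::real mat)" by simp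
lemma cp_1r: "A \<in> carrier_mat p p \<Longrightarrow> A * 1\<^sub>m p = (A::real mat)" by simp
lemmas cp_simps = cp_1l cp_1r cp_mult cp_add cp_minus cp_smult cp_assoc cp_d1 cp_d2 cp_d3 cp_d4 cp_s1 cp_s2 cp_s3 cp_s4 cp_s5


lemma g1:
  fixes M R G :: "real mat"
  assumes M: "M \<in> carrier_mat p p" and R: "R \<in> carrier_mat p p" and G: "G \<in> carrier_mat p p"
    and RMR: "R * M * R = q \<cdot>\<^sub>m R" and RR: "R * R = R" and MGM: "M * G * M = M"
    and k: "k \<noteq> 0" and c: "c \<noteq> 0" and d: "q + k \<noteq> 0"
  shows "(c \<cdot>\<^sub>m (M - (1 / (q + k)) \<cdot>\<^sub>m (M * R * M))) * ((1/c) \<cdot>\<^sub>m (G + (1/k) \<cdot>\<^sub>m R))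
     * (c \<cdot>\<^sub>m (M - (1 / (q + k)) \<cdot>\<^sub>m (M * R * M))) = c \<cdot>\<^sub>m (M - (1 / (q + k)) \<cdot>\<^sub>m (M * R * M))"
proof -
  have r1: "R * (M * R) = q \<cdot>\<^sub>m R" using RMR M R by (simp add: cp_assoc)
  have r2: "R * (M * (R * X)) = q \<cdot>\<^sub>m (R * X)" if "X \<in> carrier_mat p p" for X
    using r1 that M R by (metis cp_assoc cp_mult cp_s1)
  have r3: "R * (R * X) = R * X" if "X \<in> carrier_mat p p" for X
    using RR that R by (metis cp_assoc)
  have r4: "M * (G * M) = M" using MGM M G by (simp add: cp_assoc)
  have r5: "M * (G * (M * X)) = M * X" if "X \<in> carrier_mat p p" for X
    using r4 that M G by (metis cp_assoc cp_mult)
  show ?thesis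
    apply (simp add: cp_simps M R G r1 r2 r3 r4 r5 RR c d)
    apply (rule eq_matI)
    using M R G k c d apply (simp_all del: index_mult_mat(1))
    apply (simp add: divide_simps)
    apply (simp add: algebra_simps)
    done
qed

lemma g_gamma:
  fixes M R :: "real mat"
  assumes M: "M \<in> carrier_mat p p" and R: "R \<in> carrier_mat p p"
    and RMR: "R * M * R = q \<cdot>\<^sub>m R" and RR: "R * R = R"
    and k: "k \<noteq> 0" and c: "c \<noteq> 0" and d: "q + k \<noteq> 0"
  shows "R * (c \<cdot>\<^sub>m (M - (1 / (q + k)) \<cdot>\<^sub>m (M * R * M))) * R = (c * q * k / (q + k)) \<cdot>\<^sub>m R"
proof -
  have r1: "R * (M * R) = q \<cdot>\<^sub>m R" using RMR M R by (simp add: cp_assoc)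
  have r2: "R * (M * (R * X)) = q \<cdot>\<^sub>m (R * X)" if "X \<in> carrier_mat p p" for X
    using r1 that M R by (metis cp_assoc cp_mult cp_s1)
  have r3: "R * (R * X) = R * X" if "X \<in> carrier_mat p p" for X
    using RR that R by (metis cp_assoc)
  show ?thesis
    apply (simp add: cp_simps M R r1 r2 r3 RR c d)
    apply (rule eq_matI)
    using M R k c d apply (simp_all del: index_mult_mat(1))
    apply (simp add: divide_simps)
    apply (simp add: algebra_simps)
    done
qed

lemma g_back:
  fixes M R :: "real mat"
  assumes M: "M \<in> carrier_mat p p" and R: "R \<in> carrier_mat p p"
    and RMR: "R * M * R = q \<cdot>\<^sub>m R" and RR: "R * R = R"
    and k: "k \<noteq> 0" and c: "c \<noteq> 0" and d: "q + k \<noteq> 0"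
  shows "(1/c) \<cdot>\<^sub>m (c \<cdot>\<^sub>m (M - (1 / (q + k)) \<cdot>\<^sub>m (M * R * M))) +
     ((q + k) / (c * c * (k * k))) \<cdot>\<^sub>m ((c \<cdot>\<^sub>m (M - (1 / (q + k)) \<cdot>\<^sub>m (M * R * M))) * R * (c \<cdot>\<^sub>m (M - (1 / (q + k)) \<cdot>\<^sub>m (M * R * M)))) = M"
proof -
  have r1: "R * (M * R) = q \<cdot>\<^sub>m R" using RMR M R by (simp add: cp_assoc)
  have r2: "R * (M * (R * X)) = q \<cdot>\<^sub>m (R * X)" if "X \<in> carrier_mat p p" for X
    using r1 that M R by (metis cp_assoc cp_mult cp_s1)
  have r3: "R * (R * X) = R * X" if "X \<in> carrier_mat p p" for X
    using RR that R by (metis cp_assoc)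
  show ?thesis
    apply (simp add: cp_simps M R r1 r2 r3 RR c d)
    apply (rule eq_matI)
    using M R k c d apply (simp_all del: index_mult_mat(1))
    apply (simp add: divide_simps)
    apply (simp add: algebra_simps)
    done
qed

lemma g2:
  fixes N R G :: "real mat"
  assumes N: "N \<in> carrier_mat p p" and R: "R \<in> carrier_mat p p" and G: "G \<in> carrier_mat p p"
    and RNR: "R * N * R = (c * q * k / (q + k)) \<cdot>\<^sub>m R" and RR: "R * R = R" and NGN: "N * G * N = N"
    and k: "k \<noteq> 0" and c: "c \<noteq> 0" and d: "q + k \<noteq> 0"
  shows "((1/c) \<cdot>\<^sub>m N + ((q + k) / (c * c * (k * k))) \<cdot>\<^sub>m (N * R * N)) * (c \<cdot>\<^sub>m G - (1/k) \<cdot>\<^sub>m R)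
     * ((1/c) \<cdot>\<^sub>m N + ((q + k) / (c * c * (k * k))) \<cdot>\<^sub>m (N * R * N))
     = (1/c) \<cdot>\<^sub>m N + ((q + k) / (c * c * (k * k))) \<cdot>\<^sub>m (N * R * N)"
proof -
  define g where "g = c * q * k / (q + k)"
  have r1: "R * (N * R) = g \<cdot>\<^sub>m R" using RNR N R by (simp add: cp_assoc g_def)
  have r2: "R * (N * (R * X)) = g \<cdot>\<^sub>m (R * X)" if "X \<in> carrier_mat p p" for X
    using r1 that N R by (metis cp_assoc cp_mult cp_s1)
  have r3: "R * (R * X) = R * X" if "X \<in> carrier_mat p p" for X
    using RR that R by (metis cp_assoc)
  have r4: "N * (G * N) = N" using NGN N G by (simp add: cp_assoc)
  have r5: "N * (G * (N * X)) = N * X" if "X \<in> carrier_mat p p" for X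
    using r4 that N G by (metis cp_assoc cp_mult)
  show ?thesis
    apply (simp add: cp_simps N R G r1 r2 r3 r4 r5 RR c d)
    apply (rule eq_matI)
    using N R G k c d apply (simp_all del: index_mult_mat(1))
    apply (simp add: divide_simps g_def)
    apply (simp add: algebra_simps)
    done
qed

lemma g_fact1:
  fixes M R :: "real mat"
  assumes M: "M \<in> carrier_mat p p" and R: "R \<in> carrier_mat p p"
  shows "c \<cdot>\<^sub>m (M - (1 / (q + k)) \<cdot>\<^sub>m (M * R * M)) = M * (c \<cdot>\<^sub>m (1\<^sub>m p - (1 / (q + k)) \<cdot>\<^sub>m (R * M)))"
  by (simp add: cp_simps M R)

lemma g_fact2:
  fixes M R :: "real mat"
  assumes M: "M \<in> carrier_mat p p" and R: "R \<in> carrier_mat p p"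
    and RMR: "R * M * R = q \<cdot>\<^sub>m R" and RR: "R * R = R"
    and k: "k \<noteq> 0" and c: "c \<noteq> 0" and d: "q + k \<noteq> 0"
  shows "M = (c \<cdot>\<^sub>m (M - (1 / (q + k)) \<cdot>\<^sub>m (M * R * M))) * ((1/c) \<cdot>\<^sub>m 1\<^sub>m p + (1/(c*k)) \<cdot>\<^sub>m (R * M))"
proof -
  have r1: "R * (M * R) = q \<cdot>\<^sub>m R" using RMR M R by (simp add: cp_assoc)
  have r2: "R * (M * (R * X)) = q \<cdot>\<^sub>m (R * X)" if "X \<in> carrier_mat p p" for X
    using r1 that M R by (metis cp_assoc cp_mult cp_s1)
  have r3: "R * (R * X) = R * X" if "X \<in> carrier_mat p p" for X
    using RR that R by (metis cp_assoc)
  show ?thesis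
    apply (simp add: cp_simps M R r1 r2 r3 RR c d)
    apply (rule eq_matI)
    using M R k c d apply (simp_all del: index_mult_mat(1))
    apply (simp add: divide_simps)
    apply (simp add: algebra_simps)
    done
qed


lemma tr1:
  fixes G R B :: "real mat"
  assumes G: "G \<in> carrier_mat p p" and R: "R \<in> carrier_mat p p" and B: "B \<in> carrier_mat p p"
  shows "mat_trace (((1/c) \<cdot>\<^sub>m (G + (1/k) \<cdot>\<^sub>m R)) * B) = (1/c) * (mat_trace (G * B) + (1/k) * mat_trace (R * B))"
    and "mat_trace ((c \<cdot>\<^sub>m G - (1/k) \<cdot>\<^sub>m R) * B) = c * mat_trace (G * B) - (1/k) * mat_trace (R * B)"
  using G R B
  by (simp_all add: cp_simps mat_trace_def sum.distrib sum_subtractf sum_distrib_left sum_divide_distrib add_divide_distrib mult.commute del: index_mult_mat(1))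

lemma qf1:
  fixes G R :: "real mat" and v :: "real vec"
  assumes G: "G \<in> carrier_mat p p" and R: "R \<in> carrier_mat p p" and v: "v \<in> carrier_vec p"
  shows "v \<bullet> (((1/c) \<cdot>\<^sub>m (G + (1/k) \<cdot>\<^sub>m R)) *\<^sub>v v) = (1/c) * (v \<bullet> (G *\<^sub>v v) + (1/k) * (v \<bullet> (R *\<^sub>v v)))"
    and "v \<bullet> ((c \<cdot>\<^sub>m G - (1/k) \<cdot>\<^sub>m R) *\<^sub>v v) = c * (v \<bullet> (G *\<^sub>v v)) - (1/k) * (v \<bullet> (R *\<^sub>v v))"
  using G R v
  by (simp_all add: scalar_prod_def sum.distrib sum_subtractf sum_distrib_left algebra_simps)

end

lemma ifmult1: "(if c then 1 else 0) * (x::real) = (if c then x else 0)" by simp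
lemma ifmult2: "(x::real) * (if c then 1 else 0) = (if c then x else 0)" by simp

lemma unit_EMT:
  fixes M :: "real mat"
  assumes M: "M \<in> carrier_mat p p" and p: "p \<ge> 1"
  shows "mat_of_rows p [unit_vec p 0] * M * mat_of_cols p [unit_vec p 0] = (unit_vec p 0 \<bullet> (M *\<^sub>v unit_vec p 0)) \<cdot>\<^sub>m 1\<^sub>m 1"
  apply (rule eq_matI)
  using M p by (auto simp: scalar_prod_def mat_of_rows_def mat_of_cols_def ifmult1 ifmult2)

lemma unit_ET:
  assumes p: "p \<ge> 1"
  shows "mat_of_rows p [unit_vec p 0] * mat_of_cols p [unit_vec p 0] = (1\<^sub>m 1 :: real mat)"
  apply (rule eq_matI)
  using p by (auto simp: scalar_prod_def mat_of_rows_def mat_of_cols_def ifmult1 ifmult2)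

theorem theorem11:
  fixes p m s :: nat and a b :: real and \<beta> :: "real vec" and X :: "'x set"
    and f :: "'x \<Rightarrow> real vec" and A :: "real mat" and \<xi>s :: "'x \<Rightarrow> real"
  assumes "p \<ge> 1" and "m \<ge> 1" and "a > 0" and "b > 0"
    and "\<beta> \<in> carrier_vec p"
    and "\<And>x. x \<in> X \<Longrightarrow> f x \<in> carrier_vec p \<and> f x $ 0 = 1"
    and "A \<in> carrier_mat p s" and "vec_space.rank p A = s"
  shows "(L_optimal p X (M_PG p m a b f \<beta>) A \<xi>s \<longleftrightarrow> L_optimal p X (M_Po p f \<beta>) A \<xi>s)
    \<and> (\<forall>c \<in> carrier_vec p. c \<noteq> 0\<^sub>v p \<longrightarrow>
         (c_optimal p X (M_PG p m a b f \<beta>) c \<xi>s \<longleftrightarrow> c_optimal p X (M_Po p f \<beta>) c \<xi>s))"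
proof -
  note p = assms(1)
  define e where "e = (unit_vec p 0 :: real vec)"
  define E where "E = mat_of_cols p [e]"
  define Et where "Et = mat_of_rows p [e]"
  define R where "R = E * Et"
  define c0 where "c0 = a / b"
  define k where "k = b / real m"
  define MM where "MM = M_Po p f \<beta>"
  define NN where "NN = M_PG p m a b f \<beta>"
  define q where "q = (\<lambda>w. e \<bullet> (MM w *\<^sub>v e))"
  have c0: "c0 > 0" using assms(3,4) by (simp add: c0_def)
  have k: "k > 0" using assms(2,4) by (simp add: k_def)
  have E: "E \<in> carrier_mat p 1" and Et: "Et \<in> carrier_mat 1 p"
    by (auto simp: E_def Et_def e_def)
  have Rc: "R \<in> carrier_mat p p" using E Et by (simp add: R_def)
  have MMc: "MM w \<in> carrier_mat p p" for w by (simp add: MM_def M_Po_def)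
  have EtE: "Et * E = 1\<^sub>m 1" using unit_ET[OF p] by (simp add: E_def Et_def e_def)
  have RR: "R * R = R"
  proof -
    have "R * R = E * (Et * (E * Et))" using E Et unfolding R_def by (meson assoc_mult_mat mult_carrier_mat)
    also have "\<dots> = E * ((Et * E) * Et)" using E Et by (simp add: assoc_mult_mat[OF Et E Et])
    also have "\<dots> = R" using EtE Et by (simp add: R_def)
    finally show ?thesis .
  qed
  have RMR: "R * MM w * R = q w \<cdot>\<^sub>m R" for w
  proof -
    have M: "MM w \<in> carrier_mat p p" by (rule MMc)
    have EMT: "Et * MM w * E = q w \<cdot>\<^sub>m 1\<^sub>m 1"
      using unit_EMT[OF M p] by (simp add: E_def Et_def e_def q_def)
    have "R * MM w * R = E * (Et * MM w) * (E * Et)" using E Et M by (simp add: R_def)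
    also have "\<dots> = E * ((Et * MM w) * (E * Et))" using E Et M
      by (meson assoc_mult_mat mult_carrier_mat)
    also have "(Et * MM w) * (E * Et) = (Et * MM w * E) * Et"
      using assoc_mult_mat[OF mult_carrier_mat[OF Et M] E Et] by simp
    also have "\<dots> = q w \<cdot>\<^sub>m Et" using EMT Et by (simp add: mult_smult_assoc_mat[of _ 1 1 _ p])
    also have "E * (q w \<cdot>\<^sub>m Et) = q w \<cdot>\<^sub>m R" unfolding R_def using mult_smult_distrib[OF E Et] .
    finally show ?thesis .
  qed
  have NNe: "NN w = c0 \<cdot>\<^sub>m (MM w - (1 / (q w + k)) \<cdot>\<^sub>m (MM w * R * MM w))" for w
  proof -
    have M: "MM w \<in> carrier_mat p p" by (rule MMc)
    have "MM w * E * (Et * MM w) = MM w * (E * (Et * MM w))"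
      using assoc_mult_mat[OF M E mult_carrier_mat[OF Et M]] .
    also have "E * (Et * MM w) = R * MM w"
      unfolding R_def using assoc_mult_mat[OF E Et M] by simp
    also have "MM w * (R * MM w) = MM w * R * MM w"
      using assoc_mult_mat[OF M Rc M] by simp
    finally have eq: "MM w * E * (Et * MM w) = MM w * R * MM w" .
    have "NN w = c0 \<cdot>\<^sub>m (MM w - (1 / (q w + k)) \<cdot>\<^sub>m (MM w * E * (Et * MM w)))"
      unfolding NN_def M_PG_def Let_def c0_def k_def q_def e_def E_def Et_def MM_def by (rule refl)
    then show ?thesis using eq by simp
  qed
  have qnn: "q w \<ge> 0" if "is_design X w" for w
  proof -
    have M: "MM w \<in> carrier_mat p p" by (rule MMc)
    have "q w = MM w $$ (0, 0)"
      using M p by (simp add: q_def e_def)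
    also have "\<dots> = (\<Sum>x\<in>supp_design w. w x * exp (f x \<bullet> \<beta>) * (f x $ 0) * (f x $ 0))"
      using p by (simp add: MM_def M_Po_def)
    also have "\<dots> \<ge> 0"
      using that unfolding is_design_def
      by (intro sum_nonneg) (simp add: mult.assoc)
    finally show ?thesis .
  qed
  have dnz: "q w + k \<noteq> 0" if "is_design X w" for w using qnn[OF that] k by simp
  have NNc: "NN w \<in> carrier_mat p p" for w
    using MMc[of w] Rc unfolding NNe by (simp add: cp_mult cp_minus cp_smult)
  define \<phi> where "\<phi> = (\<lambda>G. (1/c0) \<cdot>\<^sub>m (G + (1/k) \<cdot>\<^sub>m R))"
  define \<psi> where "\<psi> = (\<lambda>G. c0 \<cdot>\<^sub>m G - (1/k) \<cdot>\<^sub>m R)"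
  have G1: "g_inverse p (NN w) (\<phi> G)" if "is_design X w" "g_inverse p (MM w) G" for w G
  proof -
    have G: "G \<in> carrier_mat p p" and MGM: "MM w * G * MM w = MM w"
      using that(2) by (auto simp: g_inverse_def)
    have "\<phi> G \<in> carrier_mat p p" using G Rc by (simp add: \<phi>_def)
    moreover have "NN w * \<phi> G * NN w = NN w"
      unfolding NNe \<phi>_def
      by (rule g1[OF MMc Rc G RMR RR MGM]) (use k c0 dnz[OF that(1)] in auto)
    ultimately show ?thesis by (simp add: g_inverse_def)
  qed
  have G2: "g_inverse p (MM w) (\<psi> G)" if "is_design X w" "g_inverse p (NN w) G" for w G
  proof -
    have G: "G \<in> carrier_mat p p" and NGN: "NN w * G * NN w = NN w"
      using that(2) by (auto simp: g_inverse_def)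
    have k0: "k \<noteq> 0" and c00: "c0 \<noteq> 0" using k c0 by auto
    note d = dnz[OF that(1)]
    have RNR: "R * NN w * R = (c0 * q w * k / (q w + k)) \<cdot>\<^sub>m R"
      unfolding NNe by (rule g_gamma[OF MMc Rc RMR RR k0 c00 d])
    have bk: "(1/c0) \<cdot>\<^sub>m NN w + ((q w + k) / (c0 * c0 * (k * k))) \<cdot>\<^sub>m (NN w * R * NN w) = MM w"
      unfolding NNe by (rule g_back[OF MMc Rc RMR RR k0 c00 d])
    have "\<psi> G \<in> carrier_mat p p" using G Rc by (simp add: \<psi>_def cp_minus cp_smult)
    moreover have "MM w * \<psi> G * MM w = MM w"
      using g2[OF NNc Rc G RNR RR NGN k0 c00 d] unfolding bk \<psi>_def .
    ultimately show ?thesis by (simp add: g_inverse_def)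
  qed
  have ID: "identifiable p (NN w) A \<longleftrightarrow> identifiable p (MM w) A" if "is_design X w" for w
  proof -
    have k0: "k \<noteq> 0" and c00: "c0 \<noteq> 0" using k c0 by auto
    note d = dnz[OF that(1)]
    define T where "T = c0 \<cdot>\<^sub>m (1\<^sub>m p - (1 / (q w + k)) \<cdot>\<^sub>m (R * MM w))"
    define S where "S = (1/c0) \<cdot>\<^sub>m 1\<^sub>m p + (1/(c0*k)) \<cdot>\<^sub>m (R * MM w)"
    have Tc: "T \<in> carrier_mat p p" and Sc: "S \<in> carrier_mat p p"
      using MMc[of w] Rc by (auto simp: T_def S_def)
    have NT: "NN w = MM w * T" unfolding NNe T_def by (rule g_fact1[OF MMc Rc])
    have MS: "MM w = NN w * S" unfolding NNe S_def by (rule g_fact2[OF MMc Rc RMR RR k0 c00 d])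
    have dc: "dim_col A = s" using assms(7) by simp
    show ?thesis
    proof
      assume "identifiable p (NN w) A"
      then obtain H where H: "H \<in> carrier_mat p s" and AH: "A = NN w * H"
        unfolding identifiable_def dc by auto
      have "A = MM w * (T * H)" using AH NT assoc_mult_mat[OF MMc Tc H] by simp
      then show "identifiable p (MM w) A" unfolding identifiable_def dc using Tc H by auto
    next
      assume "identifiable p (MM w) A"
      then obtain H where H: "H \<in> carrier_mat p s" and AH: "A = MM w * H"
        unfolding identifiable_def dc by auto
      have "A = NN w * (S * H)" using AH MS assoc_mult_mat[OF NNc Sc H] by metis
      then show "identifiable p (NN w) A" unfolding identifiable_def dc using Sc H by auto
    qed
  qed
  have VID: "(\<exists>h \<in> carrier_vec p. v = NN w *\<^sub>v h) \<longleftrightarrow> (\<exists>h \<in> carrier_vec p. v = MM w *\<^sub>v h)"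
    if "is_design X w" for w v
  proof -
    have k0: "k \<noteq> 0" and c00: "c0 \<noteq> 0" using k c0 by auto
    note d = dnz[OF that(1)]
    define T where "T = c0 \<cdot>\<^sub>m (1\<^sub>m p - (1 / (q w + k)) \<cdot>\<^sub>m (R * MM w))"
    define S where "S = (1/c0) \<cdot>\<^sub>m 1\<^sub>m p + (1/(c0*k)) \<cdot>\<^sub>m (R * MM w)"
    have Tc: "T \<in> carrier_mat p p" and Sc: "S \<in> carrier_mat p p"
      using MMc[of w] Rc by (auto simp: T_def S_def)
    have NT: "NN w = MM w * T" unfolding NNe T_def by (rule g_fact1[OF MMc Rc])
    have MS: "MM w = NN w * S" unfolding NNe S_def by (rule g_fact2[OF MMc Rc RMR RR k0 c00 d])
    show ?thesis
    proof
      assume "\<exists>h \<in> carrier_vec p. v = NN w *\<^sub>v h"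
      then obtain h where h: "h \<in> carrier_vec p" and vh: "v = NN w *\<^sub>v h" by auto
      have "v = MM w *\<^sub>v (T *\<^sub>v h)" using vh NT assoc_mult_mat_vec[OF MMc Tc h] by simp
      then show "\<exists>h \<in> carrier_vec p. v = MM w *\<^sub>v h" using Tc h by (intro bexI[of _ "T *\<^sub>v h"]) auto
    next
      assume "\<exists>h \<in> carrier_vec p. v = MM w *\<^sub>v h"
      then obtain h where h: "h \<in> carrier_vec p" and vh: "v = MM w *\<^sub>v h" by auto
      have "v = NN w *\<^sub>v (S *\<^sub>v h)" using vh MS assoc_mult_mat_vec[OF NNc Sc h] by metis
      then show "\<exists>h \<in> carrier_vec p. v = NN w *\<^sub>v h" using Sc h by (intro bexI[of _ "S *\<^sub>v h"]) auto
    qed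
  qed
  define B where "B = A * A\<^sup>T"
  have Bc: "B \<in> carrier_mat p p" using assms(7) by (simp add: B_def)
  define t where "t = mat_trace (R * B)"
  have TR1: "mat_trace (\<phi> G * B) = (1/c0) * (mat_trace (G * B) + (1/k) * t)" if "G \<in> carrier_mat p p" for G
    unfolding \<phi>_def t_def by (rule tr1(1)[OF that Rc Bc])
  have TR2: "mat_trace (\<psi> G * B) = c0 * mat_trace (G * B) - (1/k) * t" if "G \<in> carrier_mat p p" for G
    unfolding \<psi>_def t_def by (rule tr1(2)[OF that Rc Bc])
  have ic0: "1/c0 > 0" using c0 by simp
  have Lpart: "L_optimal p X NN A \<xi>s \<longleftrightarrow> L_optimal p X MM A \<xi>s"
  proof
    assume H: "L_optimal p X NN A \<xi>s"
    hence des: "is_design X \<xi>s" and idN: "identifiable p (NN \<xi>s) A"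
      and opt: "\<And>\<xi> Gs G. is_design X \<xi> \<Longrightarrow> identifiable p (NN \<xi>) A \<Longrightarrow> g_inverse p (NN \<xi>s) Gs
        \<Longrightarrow> g_inverse p (NN \<xi>) G \<Longrightarrow> mat_trace (Gs * B) \<le> mat_trace (G * B)"
      unfolding L_optimal_def B_def by auto
    show "L_optimal p X MM A \<xi>s" unfolding L_optimal_def B_def[symmetric]
    proof (intro conjI allI impI)
      show "is_design X \<xi>s" by fact
      show "identifiable p (MM \<xi>s) A" using ID[OF des] idN by simp
      fix \<xi> Gs G assume a1: "is_design X \<xi> \<and> identifiable p (MM \<xi>) A"
        and a2: "g_inverse p (MM \<xi>s) Gs" and a3: "g_inverse p (MM \<xi>) G"
      have Gc: "Gs \<in> carrier_mat p p" "G \<in> carrier_mat p p" using a2 a3 by (auto simp: g_inverse_def)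
      have "mat_trace (\<phi> Gs * B) \<le> mat_trace (\<phi> G * B)"
        using opt[of \<xi> "\<phi> Gs" "\<phi> G"] a1 ID[of \<xi>] G1[OF des a2] G1[OF _ a3] by blast
      hence "(1/c0) * (mat_trace (Gs * B) + (1/k) * t) \<le> (1/c0) * (mat_trace (G * B) + (1/k) * t)"
        using TR1 Gc by simp
      thus "mat_trace (Gs * B) \<le> mat_trace (G * B)" using c0 by (simp add: divide_le_cancel)
    qed
  next
    assume H: "L_optimal p X MM A \<xi>s"
    hence des: "is_design X \<xi>s" and idN: "identifiable p (MM \<xi>s) A"
      and opt: "\<And>\<xi> Gs G. is_design X \<xi> \<Longrightarrow> identifiable p (MM \<xi>) A \<Longrightarrow> g_inverse p (MM \<xi>s) Gs
        \<Longrightarrow> g_inverse p (MM \<xi>) G \<Longrightarrow> mat_trace (Gs * B) \<le> mat_trace (G * B)"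
      unfolding L_optimal_def B_def by auto
    show "L_optimal p X NN A \<xi>s" unfolding L_optimal_def B_def[symmetric]
    proof (intro conjI allI impI)
      show "is_design X \<xi>s" by fact
      show "identifiable p (NN \<xi>s) A" using ID[OF des] idN by simp
      fix \<xi> Gs G assume a1: "is_design X \<xi> \<and> identifiable p (NN \<xi>) A"
        and a2: "g_inverse p (NN \<xi>s) Gs" and a3: "g_inverse p (NN \<xi>) G"
      have Gc: "Gs \<in> carrier_mat p p" "G \<in> carrier_mat p p" using a2 a3 by (auto simp: g_inverse_def)
      have "mat_trace (\<psi> Gs * B) \<le> mat_trace (\<psi> G * B)"
        using opt[of \<xi> "\<psi> Gs" "\<psi> G"] a1 ID[of \<xi>] G2[OF des a2] G2[OF _ a3] by blast
      hence "c0 * mat_trace (Gs * B) \<le> c0 * mat_trace (G * B)"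
        using TR2 Gc by simp
      thus "mat_trace (Gs * B) \<le> mat_trace (G * B)" using c0 by (simp add: mult_le_cancel_left_pos)
    qed
  qed
  have Cpart: "c_optimal p X NN v \<xi>s \<longleftrightarrow> c_optimal p X MM v \<xi>s" if v: "v \<in> carrier_vec p" for v
  proof -
    define u where "u = v \<bullet> (R *\<^sub>v v)"
    have Q1: "v \<bullet> (\<phi> G *\<^sub>v v) = (1/c0) * (v \<bullet> (G *\<^sub>v v) + (1/k) * u)" if "G \<in> carrier_mat p p" for G
      unfolding \<phi>_def u_def by (rule qf1(1)[OF that Rc v])
    have Q2: "v \<bullet> (\<psi> G *\<^sub>v v) = c0 * (v \<bullet> (G *\<^sub>v v)) - (1/k) * u" if "G \<in> carrier_mat p p" for G
      unfolding \<psi>_def u_def by (rule qf1(2)[OF that Rc v])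
    show ?thesis
    proof
      assume H: "c_optimal p X NN v \<xi>s"
      hence des: "is_design X \<xi>s" and idN: "\<exists>h \<in> carrier_vec p. v = NN \<xi>s *\<^sub>v h"
        and opt: "\<And>\<xi> Gs G. is_design X \<xi> \<Longrightarrow> (\<exists>h \<in> carrier_vec p. v = NN \<xi> *\<^sub>v h) \<Longrightarrow> g_inverse p (NN \<xi>s) Gs
          \<Longrightarrow> g_inverse p (NN \<xi>) G \<Longrightarrow> v \<bullet> (Gs *\<^sub>v v) \<le> v \<bullet> (G *\<^sub>v v)"
        unfolding c_optimal_def by auto
      show "c_optimal p X MM v \<xi>s" unfolding c_optimal_def
      proof (intro conjI allI impI)
        show "is_design X \<xi>s" by fact
        show "\<exists>h \<in> carrier_vec p. v = MM \<xi>s *\<^sub>v h" using VID[OF des] idN by simp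
        fix \<xi> Gs G assume a1: "is_design X \<xi> \<and> (\<exists>h \<in> carrier_vec p. v = MM \<xi> *\<^sub>v h)"
          and a2: "g_inverse p (MM \<xi>s) Gs" and a3: "g_inverse p (MM \<xi>) G"
        have Gc: "Gs \<in> carrier_mat p p" "G \<in> carrier_mat p p" using a2 a3 by (auto simp: g_inverse_def)
        have "v \<bullet> (\<phi> Gs *\<^sub>v v) \<le> v \<bullet> (\<phi> G *\<^sub>v v)"
          using opt[of \<xi> "\<phi> Gs" "\<phi> G"] a1 VID[of \<xi> v] G1[OF des a2] G1[OF _ a3] by blast
        hence "(1/c0) * (v \<bullet> (Gs *\<^sub>v v) + (1/k) * u) \<le> (1/c0) * (v \<bullet> (G *\<^sub>v v) + (1/k) * u)"
          using Q1 Gc by simp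
        thus "v \<bullet> (Gs *\<^sub>v v) \<le> v \<bullet> (G *\<^sub>v v)" using c0 by (simp add: divide_le_cancel)
      qed
    next
      assume H: "c_optimal p X MM v \<xi>s"
      hence des: "is_design X \<xi>s" and idN: "\<exists>h \<in> carrier_vec p. v = MM \<xi>s *\<^sub>v h"
        and opt: "\<And>\<xi> Gs G. is_design X \<xi> \<Longrightarrow> (\<exists>h \<in> carrier_vec p. v = MM \<xi> *\<^sub>v h) \<Longrightarrow> g_inverse p (MM \<xi>s) Gs
          \<Longrightarrow> g_inverse p (MM \<xi>) G \<Longrightarrow> v \<bullet> (Gs *\<^sub>v v) \<le> v \<bullet> (G *\<^sub>v v)"
        unfolding c_optimal_def by auto
      show "c_optimal p X NN v \<xi>s" unfolding c_optimal_def
      proof (intro conjI allI impI)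
        show "is_design X \<xi>s" by fact
        show "\<exists>h \<in> carrier_vec p. v = NN \<xi>s *\<^sub>v h" using VID[OF des] idN by simp
        fix \<xi> Gs G assume a1: "is_design X \<xi> \<and> (\<exists>h \<in> carrier_vec p. v = NN \<xi> *\<^sub>v h)"
          and a2: "g_inverse p (NN \<xi>s) Gs" and a3: "g_inverse p (NN \<xi>) G"
        have Gc: "Gs \<in> carrier_mat p p" "G \<in> carrier_mat p p" using a2 a3 by (auto simp: g_inverse_def)
        have "v \<bullet> (\<psi> Gs *\<^sub>v v) \<le> v \<bullet> (\<psi> G *\<^sub>v v)"
          using opt[of \<xi> "\<psi> Gs" "\<psi> G"] a1 VID[of \<xi> v] G2[OF des a2] G2[OF _ a3] by blast
        hence "c0 * (v \<bullet> (Gs *\<^sub>v v)) \<le> c0 * (v \<bullet> (G *\<^sub>v v))"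
          using Q2 Gc by simp
        thus "v \<bullet> (Gs *\<^sub>v v) \<le> v \<bullet> (G *\<^sub>v v)" using c0 by (simp add: mult_le_cancel_left_pos)
      qed
    qed
  qed
  show ?thesis using Lpart Cpart unfolding NN_def MM_def by blast
qed

end
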